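(* Let $\delta>0$, let $X$ be a geodesic $\delta$--hyperbolic space, and let the group $G$ act $(\kappa_0,N_0)$--acylindrically on $X$ with $\kappa_0\geqslant\delta$; put $\rho_0:=\delta/N_0$ and $c:=\frac1{10^6}\cdot\frac{\rho_0}{\kappa_0}$. Let $U\subset G$ be finite, let $x_0\in X$ be a point with $\frac1{|U|}\sum_{u\in U}|ux_0-x_0|\leqslant E(U)+\delta$, let $U_1:=\{u\in U\mid|ux_0-x_0|\leqslant\kappa_0\}$ and $\lambda_0(U):=\max_{u\in U}|ux_0-x_0|$. If $|U_1|\geqslant\frac14|U|$ and $\lambda_0(U)\geqslant10^4\kappa_0$, then for all natural numbers $n\geqslant1$, $$|U^n|\geqslant\left(\frac c4|U|\right)^{[(n+1)/2]}.$$
   Context: Distance $|x-y|$; Gromov product $(p,q)_x=\frac12(|p-x|+|q-x|-|p-q|)$; $X$ is $\delta$--hyperbolic if $(p,r)_x\geqslant\min\{(p,q)_x,(q,r)_x\}-\delta$ for all $p,q,r,x$. The action is $(\kappa_0,N_0)$--acylindrical ($N_0\geqslant1$) if for all $x,y$ with $|x-y|\geqslant\kappa_0$ at most $N_0$ elements $g\in G$ satisfy $|gx-x|\leqslant100\delta$ and $|gy-y|\leqslant100\delta$. $E(U):=\inf_{x\in X}\frac1{|U|}\sum_{u\in U}|ux-x|$. $U^n$ is the set of products of $n$ elements of $U$; $[x]$ is the integral part. *)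

theory Defs
  imports "HOL-Analysis.Analysis" "HOL-Algebra.Group_Action"
begin

definition gromov_product :: "'a::metric_space \<Rightarrow> 'a \<Rightarrow> 'a \<Rightarrow> real" where
  "gromov_product p q x = (dist p x + dist q x - dist p q) / 2"

definition delta_hyperbolic :: "real \<Rightarrow> 'a::metric_space itself \<Rightarrow> bool" where
  "delta_hyperbolic \<delta> _ \<longleftrightarrow>
     (\<forall>p q r x::'a. gromov_product p r x \<ge> min (gromov_product p q x) (gromov_product q r x) - \<delta>)"

definition geodesic_space :: "'a::metric_space itself \<Rightarrow> bool" where
  "geodesic_space _ \<longleftrightarrow>
     (\<forall>x y::'a. \<exists>\<gamma>::real \<Rightarrow> 'a. \<gamma> 0 = x \<and> \<gamma> (dist x y) = y \<and>
        (\<forall>s\<in>{0..dist x y}. \<forall>t\<in>{0..dist x y}. dist (\<gamma> s) (\<gamma> t) = \<bar>s - t\<bar>))"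

definition isometric_action :: "('g, 'm) monoid_scheme \<Rightarrow> ('g \<Rightarrow> 'a::metric_space \<Rightarrow> 'a) \<Rightarrow> bool" where
  "isometric_action G \<phi> \<longleftrightarrow> group_action G UNIV \<phi> \<and>
     (\<forall>g\<in>carrier G. \<forall>x y. dist (\<phi> g x) (\<phi> g y) = dist x y)"

definition acylindrical ::
  "('g, 'm) monoid_scheme \<Rightarrow> ('g \<Rightarrow> 'a::metric_space \<Rightarrow> 'a) \<Rightarrow> real \<Rightarrow> real \<Rightarrow> nat \<Rightarrow> bool" where
  "acylindrical G \<phi> \<delta> \<kappa>0 N0 \<longleftrightarrow> N0 \<ge> 1 \<and>
     (\<forall>x y. dist x y \<ge> \<kappa>0 \<longrightarrow>
        (let S = {g \<in> carrier G. dist (\<phi> g x) x \<le> 100 * \<delta> \<and> dist (\<phi> g y) y \<le> 100 * \<delta>}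
         in finite S \<and> card S \<le> N0))"

definition displacement_energy :: "('g \<Rightarrow> 'a::metric_space \<Rightarrow> 'a) \<Rightarrow> 'g set \<Rightarrow> real" where
  "displacement_energy \<phi> U = (INF x. (\<Sum>u\<in>U. dist (\<phi> u x) x) / real (card U))"

fun set_power :: "('g, 'm) monoid_scheme \<Rightarrow> 'g set \<Rightarrow> nat \<Rightarrow> 'g set" where
  "set_power G U 0 = {\<one>\<^bsub>G\<^esub>}"
| "set_power G U (Suc n) = {a \<otimes>\<^bsub>G\<^esub> b | a b. a \<in> set_power G U n \<and> b \<in> U}"

end

theory Submission
  imports Defs
begin


lemma gp_sym: "gromov_product p q x = gromov_product q p x"
  unfolding gromov_product_def by (simp add: dist_commute)
lemma gp_self: "gromov_product p q q = 0"
  unfolding gromov_product_def by (simp add: dist_commute)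
lemma gp_same: "gromov_product p p x = dist p x"
  unfolding gromov_product_def by simp
lemma gp_comp: "gromov_product y A x + gromov_product x y A = dist A x"
  unfolding gromov_product_def by (simp add: dist_commute field_simps)
lemma gp_perturb: "\<bar>gromov_product p q x - gromov_product p' q x\<bar> \<le> dist p p'"
proof -
  have "\<bar>dist p x - dist p' x\<bar> \<le> dist p p'" "\<bar>dist p q - dist p' q\<bar> \<le> dist p p'"
    by (metis abs_le_iff dist_commute dist_triangle3 minus_diff_eq diff_le_eq)+
  thus ?thesis unfolding gromov_product_def by (simp add: abs_le_iff field_simps)
qed

locale hypact =
  fixes G :: "('g, 'm) monoid_scheme" (structure)
    and \<phi> :: "'g \<Rightarrow> 'a::metric_space \<Rightarrow> 'a" and \<delta> :: real
  assumes act: "group_action G UNIV \<phi>"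
    and iso: "g \<in> carrier G \<Longrightarrow> dist (\<phi> g x) (\<phi> g y) = dist x y"
    and hyp: "gromov_product p r x \<ge> min (gromov_product p q x) (gromov_product q r x) - \<delta>"
    and dpos: "\<delta> > 0"
begin

lemma grp: "group G"
  using act group_action.group_hom group_hom.axioms(1) by blast

lemma act_mult: "g \<in> carrier G \<Longrightarrow> h \<in> carrier G \<Longrightarrow> \<phi> (g \<otimes> h) x = \<phi> g (\<phi> h x)"
  using group_action.composition_rule[OF act] by blast

lemma act_inv1: "g \<in> carrier G \<Longrightarrow> \<phi> (inv g) (\<phi> g x) = x"
  using group_action.orbit_sym_aux[OF act] by blast

lemma act_inv2: "g \<in> carrier G \<Longrightarrow> \<phi> g (\<phi> (inv g) x) = x"
  using group_action.orbit_sym_aux[OF act, of "inv g"] grp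
  by (metis UNIV_I group.inv_closed group.inv_inv)

lemma act_one: "\<phi> \<one> x = x"
  using group_action.id_eq_one[OF act] by (metis UNIV_I restrict_apply)

lemma gp_iso: "g \<in> carrier G \<Longrightarrow> gromov_product (\<phi> g p) (\<phi> g q) (\<phi> g x) = gromov_product p q x"
  unfolding gromov_product_def by (simp add: iso)


definition prodl :: "'g list \<Rightarrow> 'g" where
  "prodl xs = foldr (\<lambda>x acc. x \<otimes> acc) xs \<one>"

lemma prodl_Nil[simp]: "prodl [] = \<one>" and prodl_Cons[simp]: "prodl (x # xs) = x \<otimes> prodl xs"
  by (simp_all add: prodl_def)

lemma prodl_closed: "set xs \<subseteq> carrier G \<Longrightarrow> prodl xs \<in> carrier G"
  by (induction xs) (auto intro: group.subgroup_self[OF grp] monoid.m_closed[OF group.is_monoid[OF grp]] monoid.one_closed[OF group.is_monoid[OF grp]])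

context
  fixes xb :: 'a and V :: "'b set" and g :: "'b \<Rightarrow> 'g" and D \<epsilon> :: real
  assumes gc: "\<And>a. a \<in> V \<Longrightarrow> g a \<in> carrier G"
    and gD: "\<And>a. a \<in> V \<Longrightarrow> dist (\<phi> (g a) xb) xb \<ge> D"
    and gback: "\<And>a b. a \<in> V \<Longrightarrow> b \<in> V \<Longrightarrow> gromov_product (\<phi> (inv (g a)) xb) (\<phi> (g b) xb) xb \<le> \<epsilon>"
    and gsep: "\<And>a b. a \<in> V \<Longrightarrow> b \<in> V \<Longrightarrow> a \<noteq> b \<Longrightarrow> gromov_product (\<phi> (g a) xb) (\<phi> (g b) xb) xb \<le> \<epsilon>"
    and Dbig: "D > 3 * \<epsilon> + 3 * \<delta>" and epos: "\<epsilon> \<ge> 0"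
begin

lemma chain: "as \<noteq> [] \<Longrightarrow> set as \<subseteq> V \<Longrightarrow>
   gromov_product xb (\<phi> (prodl (map g as)) xb) (\<phi> (g (hd as)) xb) \<le> \<epsilon> + \<delta>"
proof (induction as rule: induct_list012)
  case 1 then show ?case by simp
next
  case (2 a) then show ?case
    using gc[of a] grp epos dpos by (simp add: monoid.r_one[OF group.is_monoid[OF grp]] gp_self del: dist_commute)
next
  case (3 a b rest)
  have a: "a \<in> V" and b: "b \<in> V" and r: "set rest \<subseteq> V" using 3 by auto
  define P where "P = prodl (map g (b # rest))"
  have Pc: "P \<in> carrier G" unfolding P_def using r a b gc by (intro prodl_closed) auto
  have ga: "g a \<in> carrier G" and gb: "g b \<in> carrier G" using a b gc by auto
  have IH: "gromov_product xb (\<phi> P xb) (\<phi> (g b) xb) \<le> \<epsilon> + \<delta>"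
    using 3(2) b r unfolding P_def by simp
  define y1 where "y1 = \<phi> (g a) xb"
  define y2 where "y2 = \<phi> (g a) (\<phi> (g b) xb)"
  define yk where "yk = \<phi> (g a) (\<phi> P xb)"
  have IH': "gromov_product y1 yk y2 \<le> \<epsilon> + \<delta>"
    using IH gp_iso[OF ga] unfolding y1_def yk_def y2_def by metis
  have "gromov_product xb y2 y1 = gromov_product (\<phi> (inv (g a)) xb) (\<phi> (g b) xb) xb"
    using gp_iso[OF ga, of "\<phi> (inv (g a)) xb" "\<phi> (g b) xb" xb] act_inv2[OF ga]
    unfolding y1_def y2_def by simp
  also have "\<dots> \<le> \<epsilon>" using gback a b by blast
  finally have e1: "gromov_product xb y2 y1 \<le> \<epsilon>" .
  have d12: "dist y1 y2 \<ge> D" unfolding y1_def y2_def using iso[OF ga] gD[OF b]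
    by (simp add: dist_commute)
  have e2: "gromov_product yk y2 y1 \<ge> D - \<epsilon> - \<delta>"
    using gp_comp[of yk y2 y1] gp_sym[of yk y1 y2] IH' d12 by (simp add: dist_commute)
  have "gromov_product xb y2 y1 \<ge> min (gromov_product xb yk y1) (gromov_product yk y2 y1) - \<delta>"
    by (rule hyp)
  hence "gromov_product xb yk y1 \<le> \<epsilon> + \<delta>" using e1 e2 Dbig epos dpos by (auto simp: min_def split: if_splits)
  moreover have "\<phi> (prodl (map g (a # b # rest))) xb = yk"
    unfolding yk_def using act_mult[OF ga Pc] P_def by simp
  ultimately show ?case unfolding y1_def by simp
qed

lemma pp_inj: "set as \<subseteq> V \<Longrightarrow> set bs \<subseteq> V \<Longrightarrow> length as = length bs \<Longrightarrow>
   prodl (map g as) = prodl (map g bs) \<Longrightarrow> as = bs"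
proof (induction as arbitrary: bs)
  case Nil then show ?case by simp
next
  case (Cons a as)
  then obtain b bs' where bs: "bs = b # bs'" by (cases bs) auto
  have a: "a \<in> V" and b: "b \<in> V" and asV: "set as \<subseteq> V" and bsV: "set bs' \<subseteq> V"
    using Cons.prems bs by auto
  have ga: "g a \<in> carrier G" and gb: "g b \<in> carrier G" using a b gc by auto
  have Pa: "prodl (map g as) \<in> carrier G" using asV gc by (intro prodl_closed) auto
  have Pb: "prodl (map g bs') \<in> carrier G" using bsV gc by (intro prodl_closed) auto
  have eq: "g a \<otimes> prodl (map g as) = g b \<otimes> prodl (map g bs')" using Cons.prems bs by simp
  show ?case
  proof (cases "a = b")
    case True
    then have "prodl (map g as) = prodl (map g bs')"
      using eq Pa Pb gb grp by (metis group.Units_eq monoid.Units_l_cancel group.is_monoid)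
    then show ?thesis using Cons.IH[OF asV bsV] Cons.prems bs True by simp
  next
    case False
    define y where "y = \<phi> (g a \<otimes> prodl (map g as)) xb"
    have y2: "y = \<phi> (g b \<otimes> prodl (map g bs')) xb" using eq y_def by simp
    have ca: "gromov_product xb y (\<phi> (g a) xb) \<le> \<epsilon> + \<delta>"
      using chain[of "a # as"] a asV y_def by simp
    have cb: "gromov_product xb y (\<phi> (g b) xb) \<le> \<epsilon> + \<delta>"
      using chain[of "b # bs'"] b bsV y2 by simp
    have fa: "gromov_product (\<phi> (g a) xb) y xb \<ge> D - \<epsilon> - \<delta>"
      using gp_comp[of y "\<phi> (g a) xb" xb] gp_sym[of y "\<phi> (g a) xb" xb] ca gD[OF a] by linarith
    have fb: "gromov_product y (\<phi> (g b) xb) xb \<ge> D - \<epsilon> - \<delta>"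
      using gp_comp[of y "\<phi> (g b) xb" xb] cb gD[OF b] by linarith
    have "gromov_product (\<phi> (g a) xb) (\<phi> (g b) xb) xb \<ge>
       min (gromov_product (\<phi> (g a) xb) y xb) (gromov_product y (\<phi> (g b) xb) xb) - \<delta>"
      by (rule hyp)
    moreover have "gromov_product (\<phi> (g a) xb) (\<phi> (g b) xb) xb \<le> \<epsilon>" using gsep a b False by blast
    ultimately show ?thesis using fa fb Dbig epos dpos by (auto simp: min_def split: if_splits)
  qed
qed

end


lemma pos_lemma:
  assumes a: "a \<in> carrier G" and ad: "dist (\<phi> a x0) x0 \<le> \<kappa>"
    and t: "t > \<kappa> + \<delta>" and d1: "dist x0 p = t" and d2: "dist p q = L - t" and d3: "dist x0 q = L"
  shows "t + (dist x0 (\<phi> a q) - L) \<le> dist x0 (\<phi> a p)"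
    and "dist x0 (\<phi> a p) \<le> t + (dist x0 (\<phi> a q) - L) + 2 * \<delta>"
proof -
  define z where "z = \<phi> a p"
  define ax where "ax = \<phi> a x0"
  define aq where "aq = \<phi> a q"
  have e1: "dist ax z = t" "dist z aq = L - t" "dist ax aq = L"
    unfolding z_def ax_def aq_def using iso[OF a] d1 d2 d3 by auto
  have "gromov_product ax aq z = 0" unfolding gromov_product_def using e1 by (simp add: dist_commute)
  moreover have "gromov_product ax aq z \<ge> min (gromov_product ax x0 z) (gromov_product x0 aq z) - \<delta>"
    by (rule hyp)
  moreover have "dist x0 z \<ge> t - \<kappa>" using dist_triangle[of ax z x0] e1 ad unfolding ax_def
    by (simp add: dist_commute)
  hence "gromov_product ax x0 z > \<delta>" unfolding gromov_product_def using e1 ad t unfolding ax_def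
    by (simp add: dist_commute)
  ultimately have "gromov_product x0 aq z \<le> \<delta>" by (auto simp: min_def split: if_splits)
  hence "dist x0 z + (L - t) - dist x0 aq \<le> 2 * \<delta>" unfolding gromov_product_def using e1
    by (simp add: dist_commute)
  then show "dist x0 (\<phi> a p) \<le> t + (dist x0 (\<phi> a q) - L) + 2 * \<delta>"
    unfolding z_def aq_def by simp
  have "dist x0 aq \<le> dist x0 z + dist z aq" by (rule dist_triangle)
  then show "t + (dist x0 (\<phi> a q) - L) \<le> dist x0 (\<phi> a p)" using e1 unfolding z_def aq_def by simp
qed

lemma fellow_lemma:
  assumes a: "a \<in> carrier G" and ad: "dist (\<phi> a x0) x0 \<le> \<kappa>"
    and b: "b \<in> carrier G" and bd: "dist (\<phi> b x0) x0 \<le> \<kappa>"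
    and t: "t > \<kappa> + \<delta>" and d1: "dist x0 p = t" and d2: "dist p q = L - t" and d3: "dist x0 q = L"
    and tT: "t + \<kappa> \<le> T - \<delta>"
    and gT: "gromov_product (\<phi> a q) (\<phi> b q) x0 \<ge> T - \<delta>"
    and sig: "\<bar>dist x0 (\<phi> a q) - dist x0 (\<phi> b q)\<bar> \<le> \<delta>"
  shows "dist (\<phi> a p) (\<phi> b p) \<le> 9 * \<delta>"
proof -
  define sa where "sa = dist x0 (\<phi> a q) - L"
  define sb where "sb = dist x0 (\<phi> b q) - L"
  define z where "z = \<phi> a p"
  define z' where "z' = \<phi> b p"
  define Z where "Z = \<phi> a q"
  define Z' where "Z' = \<phi> b q"
  have pa: "t + sa \<le> dist x0 z" "dist x0 z \<le> t + sa + 2 * \<delta>"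
    using pos_lemma[OF a ad t d1 d2 d3] unfolding sa_def z_def by auto
  have pb: "t + sb \<le> dist x0 z'" "dist x0 z' \<le> t + sb + 2 * \<delta>"
    using pos_lemma[OF b bd t d1 d2 d3] unfolding sb_def z'_def by auto
  have "\<bar>dist x0 (\<phi> a q) - dist (\<phi> a x0) (\<phi> a q)\<bar> \<le> \<kappa>"
    using ad dist_triangle[of x0 "\<phi> a q" "\<phi> a x0"] dist_triangle[of "\<phi> a x0" "\<phi> a q" x0] by (simp add: dist_commute abs_le_iff)
  hence sak: "\<bar>sa\<bar> \<le> \<kappa>" unfolding sa_def using iso[OF a, of x0 q] d3 by simp
  have "\<bar>dist x0 (\<phi> b q) - dist (\<phi> b x0) (\<phi> b q)\<bar> \<le> \<kappa>"
    using bd dist_triangle[of x0 "\<phi> b q" "\<phi> b x0"] dist_triangle[of "\<phi> b x0" "\<phi> b q" x0] by (simp add: dist_commute abs_le_iff)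
  hence sbk: "\<bar>sb\<bar> \<le> \<kappa>" unfolding sb_def using iso[OF b, of x0 q] d3 by simp
  have zZ: "gromov_product z Z x0 \<ge> t + sa"
    unfolding gromov_product_def z_def Z_def using pa iso[OF a, of p q] d2 unfolding sa_def z_def
    by (simp add: dist_commute)
  have zZ': "gromov_product z' Z' x0 \<ge> t + sb"
    unfolding gromov_product_def z'_def Z'_def using pb iso[OF b, of p q] d2 unfolding sb_def z'_def
    by (simp add: dist_commute)
  have h1: "gromov_product z Z' x0 \<ge> min (gromov_product z Z x0) (gromov_product Z Z' x0) - \<delta>" by (rule hyp)
  have h2: "gromov_product z z' x0 \<ge> min (gromov_product z Z' x0) (gromov_product Z' z' x0) - \<delta>" by (rule hyp)
  have "gromov_product Z' z' x0 = gromov_product z' Z' x0" by (rule gp_sym)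
  define m0 where "m0 = min (t + sa) (t + sb)"
  have A: "gromov_product z Z x0 \<ge> m0" using zZ unfolding m0_def by linarith
  have B: "gromov_product Z Z' x0 \<ge> m0" using gT tT sak unfolding m0_def Z_def Z'_def
    by (simp add: abs_le_iff min_le_iff_disj)
  have C: "gromov_product Z' z' x0 \<ge> m0" using zZ' gp_sym[of Z' z' x0] unfolding m0_def by linarith
  have "min (gromov_product z Z x0) (gromov_product Z Z' x0) \<ge> m0" using A B by simp
  hence D1: "gromov_product z Z' x0 \<ge> m0 - \<delta>" using h1 by linarith
  have "min (gromov_product z Z' x0) (gromov_product Z' z' x0) \<ge> m0 - \<delta>" using D1 C dpos by simp
  hence m: "gromov_product z z' x0 \<ge> m0 - 2 * \<delta>" using h2 by linarith
  have "dist z z' = dist x0 z + dist x0 z' - 2 * gromov_product z z' x0"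
    unfolding gromov_product_def by (simp add: dist_commute field_simps)
  also have "\<dots> \<le> 9 * \<delta>" using m pa pb sig unfolding sa_def sb_def m0_def
    by (auto simp: min_def abs_le_iff split: if_splits)
  finally show ?thesis unfolding z_def z'_def .
qed

end



lemma sp_carrier: "group G \<Longrightarrow> U \<subseteq> carrier G \<Longrightarrow> set_power G U m \<subseteq> carrier G"
  by (induction m) (auto intro: monoid.m_closed[OF group.is_monoid] monoid.one_closed[OF group.is_monoid])

lemma sp_finite: "finite U \<Longrightarrow> finite (set_power G U m)"
proof (induction m)
  case 0 then show ?case by simp
next
  case (Suc m)
  have "set_power G U (Suc m) = (\<lambda>(a,b). a \<otimes>\<^bsub>G\<^esub> b) ` (set_power G U m \<times> U)" by auto
  then show ?case using Suc by simp
qed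

lemma sp_mult: assumes "group G" "U \<subseteq> carrier G"
  shows "x \<in> set_power G U m \<Longrightarrow> y \<in> set_power G U m' \<Longrightarrow> x \<otimes>\<^bsub>G\<^esub> y \<in> set_power G U (m + m')"
proof (induction m' arbitrary: y)
  case 0
  then show ?case using sp_carrier[OF assms, of m] assms(1)
    by (auto simp: monoid.r_one[OF group.is_monoid])
next
  case (Suc m')
  then obtain a b where y: "y = a \<otimes>\<^bsub>G\<^esub> b" "a \<in> set_power G U m'" "b \<in> U" by auto
  have c: "x \<in> carrier G" "a \<in> carrier G" "b \<in> carrier G"
    using sp_carrier[OF assms] y Suc.prems assms(2) by auto
  have "x \<otimes>\<^bsub>G\<^esub> y = (x \<otimes>\<^bsub>G\<^esub> a) \<otimes>\<^bsub>G\<^esub> b"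
    using y c by (simp add: monoid.m_assoc[OF group.is_monoid[OF assms(1)]])
  moreover have "x \<otimes>\<^bsub>G\<^esub> a \<in> set_power G U (m + m')" using Suc.IH Suc.prems y by blast
  ultimately show ?case using y by auto
qed

lemma sp_card_mono: assumes "group G" "U \<subseteq> carrier G" "finite U" "U \<noteq> {}"
  shows "card (set_power G U m) \<le> card (set_power G U (Suc m))"
proof -
  obtain b where b: "b \<in> U" using assms by auto
  have "inj_on (\<lambda>x. x \<otimes>\<^bsub>G\<^esub> b) (set_power G U m)"
    using sp_carrier[OF assms(1,2)] b assms(2)
    by (intro inj_onI) (metis assms(1) group.right_cancel subsetD)
  moreover have "(\<lambda>x. x \<otimes>\<^bsub>G\<^esub> b) ` set_power G U m \<subseteq> set_power G U (Suc m)" using b by auto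
  ultimately show ?thesis using card_inj_on_le sp_finite[OF assms(3)] by blast
qed

lemma sp_card_mono': assumes "group G" "U \<subseteq> carrier G" "finite U" "U \<noteq> {}" "m \<le> m'"
  shows "card (set_power G U m) \<le> card (set_power G U m')"
  using assms(5)
proof (induction m' rule: dec_induct)
  case base then show ?case by simp
next
  case (step k) then show ?case using sp_card_mono[OF assms(1-4), of k] by simp
qed

lemma sp_nonempty: "U \<noteq> {} \<Longrightarrow> set_power G U m \<noteq> {}"
  by (induction m) auto

lemma sp_one: assumes "group G" "U \<subseteq> carrier G" "a \<in> U" shows "a \<in> set_power G U 1"
proof -
  have "\<one>\<^bsub>G\<^esub> \<otimes>\<^bsub>G\<^esub> a \<in> set_power G U 1" using assms(3) by auto
  moreover have "\<one>\<^bsub>G\<^esub> \<otimes>\<^bsub>G\<^esub> a = a" using assms by (auto simp: monoid.l_one[OF group.is_monoid])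
  ultimately show ?thesis by simp
qed

fun wd :: "('g, 'm) monoid_scheme \<Rightarrow> 'g \<Rightarrow> 'g list \<Rightarrow> 'g" where
  "wd G u [] = \<one>\<^bsub>G\<^esub>"
| "wd G u [a] = a"
| "wd G u (a # b # r) = a \<otimes>\<^bsub>G\<^esub> u \<otimes>\<^bsub>G\<^esub> wd G u (b # r)"

lemma wd_in: assumes "group G" "U \<subseteq> carrier G" "u \<in> U"
  shows "as \<noteq> [] \<Longrightarrow> set as \<subseteq> U \<Longrightarrow> wd G u as \<in> set_power G U (2 * length as - 1)"
proof (induction as rule: induct_list012)
  case 1 then show ?case by simp
next
  case (2 a)
  then show ?case using sp_one[OF assms(1,2)] by simp
next
  case (3 a b r)
  have "a \<otimes>\<^bsub>G\<^esub> u \<in> set_power G U 2" 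
  proof -
    have "a \<in> set_power G U 1" using 3 sp_one[OF assms(1,2)] by simp
    thus ?thesis using assms(3) by (auto simp: numeral_2_eq_2)
  qed
  moreover have "wd G u (b # r) \<in> set_power G U (2 * length (b # r) - 1)" using 3 by auto
  ultimately have "a \<otimes>\<^bsub>G\<^esub> u \<otimes>\<^bsub>G\<^esub> wd G u (b # r) \<in> set_power G U (2 + (2 * length (b # r) - 1))"
    using sp_mult[OF assms(1,2)] by blast
  moreover have "2 + (2 * length (b # r) - 1) = 2 * length (a # b # r) - 1" by simp
  ultimately show ?case by simp
qed

lemma wd_closed: "group G \<Longrightarrow> u \<in> carrier G \<Longrightarrow> set as \<subseteq> carrier G \<Longrightarrow> wd G u as \<in> carrier G"
  by (induction G u as rule: wd.induct) (auto intro: monoid.m_closed[OF group.is_monoid] monoid.one_closed[OF group.is_monoid])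

context hypact begin
lemma wd_prodl: "u \<in> carrier G \<Longrightarrow> set as \<subseteq> carrier G \<Longrightarrow> as \<noteq> [] \<Longrightarrow>
   wd G u as \<otimes> u = prodl (map (\<lambda>a. a \<otimes> u) as)"
proof (induction as rule: induct_list012)
  case 1 then show ?case by simp
next
  case (2 a) then show ?case using grp by (simp add: monoid.r_one[OF group.is_monoid] monoid.m_closed[OF group.is_monoid])
next
  case (3 a b r)
  have c: "a \<in> carrier G" "wd G u (b # r) \<in> carrier G"
    using 3 wd_closed[OF grp, of u "b # r"] by auto
  have "wd G u (a # b # r) \<otimes> u = (a \<otimes> u) \<otimes> (wd G u (b # r) \<otimes> u)"
    using c 3(3) grp by (simp add: monoid.m_assoc[OF group.is_monoid] monoid.m_closed[OF group.is_monoid])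
  then show ?case using 3 by simp
qed
end




lemma greedy:
  assumes "finite S" "\<And>a. a \<in> S \<Longrightarrow> P a a" "\<And>a b. P a b \<Longrightarrow> P b a"
  shows "\<exists>V\<subseteq>S. (\<forall>a\<in>V. \<forall>b\<in>V. a \<noteq> b \<longrightarrow> \<not> P a b) \<and> (\<forall>a\<in>S. \<exists>v\<in>V. P a v)"
  using assms(1,2)
proof (induction S rule: finite_psubset_induct)
  case (psubset A)
  show ?case
  proof (cases "A = {}")
    case True then show ?thesis by auto
  next
    case False
    then obtain a where a: "a \<in> A" by auto
    define B where "B = {b \<in> A. \<not> P b a}"
    have "B \<subset> A" unfolding B_def using a psubset.prems by auto
    then obtain V where V: "V \<subseteq> B" "\<forall>x\<in>V. \<forall>y\<in>V. x \<noteq> y \<longrightarrow> \<not> P x y" "\<forall>x\<in>B. \<exists>v\<in>V. P x v"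
      using psubset.IH[of B] psubset.prems unfolding B_def by auto
    have "insert a V \<subseteq> A" using V(1) a unfolding B_def by auto
    moreover have "\<forall>x\<in>insert a V. \<forall>y\<in>insert a V. x \<noteq> y \<longrightarrow> \<not> P x y"
      using V(1,2) assms(3) unfolding B_def by blast
    moreover have "\<forall>x\<in>A. \<exists>v\<in>insert a V. P x v" using V(3) unfolding B_def by blast
    ultimately show ?thesis by blast
  qed
qed

lemma card_cover:
  assumes "finite V" "S \<subseteq> (\<Union>v\<in>V. C v)" "\<And>v. v \<in> V \<Longrightarrow> card (C v) \<le> M" "\<And>v. v \<in> V \<Longrightarrow> finite (C v)"
  shows "card S \<le> card V * M"
proof -
  have "card S \<le> card (\<Union>v\<in>V. C v)" using assms by (intro card_mono) auto
  also have "\<dots> \<le> (\<Sum>v\<in>V. card (C v))" using assms(1) by (rule card_UN_le)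
  also have "\<dots> \<le> (\<Sum>v\<in>V. M)" using assms(3) by (rule sum_mono)
  finally show ?thesis by simp
qed

lemma floor_eq_close: assumes "\<lfloor>x / d\<rfloor> = \<lfloor>y / d\<rfloor>" "d > 0" shows "\<bar>x - y\<bar> \<le> d"
proof -
  have "\<bar>x / d - y / d\<bar> < 1" using assms(1) floor_correct[of "x/d"] floor_correct[of "y/d"]
    by (simp add: abs_less_iff) linarith
  hence "\<bar>x - y\<bar> / d < 1" using assms(2) by (simp add: diff_divide_distrib[symmetric])
  thus ?thesis using assms(2) by (simp add: divide_less_eq)
qed




theorem proposition5p5:
  fixes G :: "('g, 'm) monoid_scheme"
    and \<phi> :: "'g \<Rightarrow> 'a::metric_space \<Rightarrow> 'a"
    and \<delta> \<kappa>0 :: real and N0 :: nat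
    and U :: "'g set" and x0 :: 'a and n :: nat
  assumes "\<delta> > 0"
    and "geodesic_space TYPE('a)"
    and "delta_hyperbolic \<delta> TYPE('a)"
    and "isometric_action G \<phi>"
    and "acylindrical G \<phi> \<delta> \<kappa>0 N0"
    and "\<kappa>0 \<ge> \<delta>"
    and "finite U" and "U \<noteq> {}" and "U \<subseteq> carrier G"
    and "(\<Sum>u\<in>U. dist (\<phi> u x0) x0) / real (card U) \<le> displacement_energy \<phi> U + \<delta>"
    and "real (card {u \<in> U. dist (\<phi> u x0) x0 \<le> \<kappa>0}) \<ge> real (card U) / 4"
    and "Max ((\<lambda>u. dist (\<phi> u x0) x0) ` U) \<ge> 10^4 * \<kappa>0"
    and "n \<ge> 1"
  shows "real (card (set_power G U n)) \<ge>
           ((1 / 10^6) * ((\<delta> / real N0) / \<kappa>0) / 4 * real (card U)) ^ ((n + 1) div 2)"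
proof -
  have dpos: "\<delta> > 0" and kd: "\<kappa>0 \<ge> \<delta>" and finU: "finite U" and neU: "U \<noteq> {}"
    and Uc: "U \<subseteq> carrier G" using assms by auto
  have kpos: "\<kappa>0 > 0" using dpos kd by linarith
  have ga: "group_action G UNIV \<phi>" and isoG: "\<And>g x y. g \<in> carrier G \<Longrightarrow> dist (\<phi> g x) (\<phi> g y) = dist x y"
    using assms(4) unfolding isometric_action_def by auto
  have hypG: "\<And>p q r x::'a. gromov_product p r x \<ge> min (gromov_product p q x) (gromov_product q r x) - \<delta>"
    using assms(3) unfolding delta_hyperbolic_def by blast
  interpret H: hypact G \<phi> \<delta>
    by (rule hypact.intro) (use ga isoG hypG dpos in auto)
  have grp: "group G" by (rule H.grp)
  have N0: "N0 \<ge> 1" using assms(5) unfolding acylindrical_def by auto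
  have acyl: "\<And>x y. dist x y \<ge> \<kappa>0 \<Longrightarrow>
      finite {g \<in> carrier G. dist (\<phi> g x) x \<le> 100 * \<delta> \<and> dist (\<phi> g y) y \<le> 100 * \<delta>} \<and>
      card {g \<in> carrier G. dist (\<phi> g x) x \<le> 100 * \<delta> \<and> dist (\<phi> g y) y \<le> 100 * \<delta>} \<le> N0"
    using assms(5) unfolding acylindrical_def Let_def by blast
  define \<beta> where "\<beta> = (1 / 10^6) * ((\<delta> / real N0) / \<kappa>0) / 4 * real (card U)"
  define k where "k = (n + 1) div 2"
  have k1: "k \<ge> 1" "2 * k - 1 \<le> n" unfolding k_def using assms(13) by auto
  have finP: "finite (set_power G U n)" by (rule sp_finite[OF finU])
  have neP: "set_power G U n \<noteq> {}" by (rule sp_nonempty[OF neU])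
  have cardP1: "real (card (set_power G U n)) \<ge> 1" using finP neP
    by (simp add: Suc_leI card_gt_0_iff)
  have bpos: "\<beta> \<ge> 0" unfolding \<beta>_def using dpos kpos by simp
  have "real (card (set_power G U n)) \<ge> \<beta> ^ k"
  proof (cases "\<beta> \<le> 1")
    case True
    then have "\<beta> ^ k \<le> 1" using bpos by (simp add: power_le_one)
    then show ?thesis using cardP1 by linarith
  next
    case False
    then have b1: "\<beta> > 1" by simp

    define L where "L = Max ((\<lambda>u. dist (\<phi> u x0) x0) ` U)"
    have "L \<in> (\<lambda>u. dist (\<phi> u x0) x0) ` U" unfolding L_def using finU neU by (intro Max_in) auto
    then obtain u where u: "u \<in> U" "dist (\<phi> u x0) x0 = L" by auto
    have uc: "u \<in> carrier G" using u Uc by auto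
    have Lbig: "L \<ge> 10^4 * \<kappa>0" using assms(12) unfolding L_def .
    define q where "q = \<phi> u x0"
    have dq: "dist x0 q = L" using u unfolding q_def by (simp add: dist_commute)
    obtain \<gamma> :: "real \<Rightarrow> 'a" where \<gamma>0: "\<gamma> 0 = x0" and \<gamma>L: "\<gamma> L = q"
      and \<gamma>d: "\<And>s t. s \<in> {0..L} \<Longrightarrow> t \<in> {0..L} \<Longrightarrow> dist (\<gamma> s) (\<gamma> t) = \<bar>s - t\<bar>"
      using assms(2) dq unfolding geodesic_space_def by metis
    define T where "T = 10 * \<kappa>0"
    define p1 where "p1 = \<gamma> (3 * \<kappa>0)"
    define p2 where "p2 = \<gamma> (4 * \<kappa>0)"
    have r: "0 \<in> {0..L}" "3 * \<kappa>0 \<in> {0..L}" "4 * \<kappa>0 \<in> {0..L}" "L \<in> {0..L}" using kpos Lbig by auto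
    have dp1: "dist x0 p1 = 3 * \<kappa>0" "dist p1 q = L - 3 * \<kappa>0"
      using \<gamma>d[OF r(1) r(2)] \<gamma>d[OF r(2) r(4)] \<gamma>0 \<gamma>L kpos Lbig unfolding p1_def by auto
    have dp2: "dist x0 p2 = 4 * \<kappa>0" "dist p2 q = L - 4 * \<kappa>0"
      using \<gamma>d[OF r(1) r(3)] \<gamma>d[OF r(3) r(4)] \<gamma>0 \<gamma>L kpos Lbig unfolding p2_def by auto
    have dp12: "dist p1 p2 = \<kappa>0" using \<gamma>d[OF r(2) r(3)] kpos unfolding p1_def p2_def by auto
    define U1 where "U1 = {a \<in> U. dist (\<phi> a x0) x0 \<le> \<kappa>0}"
    have U1c: "\<And>a. a \<in> U1 \<Longrightarrow> a \<in> carrier G" "\<And>a. a \<in> U1 \<Longrightarrow> dist (\<phi> a x0) x0 \<le> \<kappa>0"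
      unfolding U1_def using Uc by auto
    have finU1: "finite U1" unfolding U1_def using finU by simp
    have sig: "\<And>a. a \<in> U1 \<Longrightarrow> \<bar>dist x0 (\<phi> a q) - L\<bar> \<le> \<kappa>0"
    proof -
      fix a assume a: "a \<in> U1"
      have "dist (\<phi> a x0) (\<phi> a q) = L" using isoG[OF U1c(1)[OF a]] dq by simp
      thus "\<bar>dist x0 (\<phi> a q) - L\<bar> \<le> \<kappa>0"
        using U1c(2)[OF a] dist_triangle[of x0 "\<phi> a q" "\<phi> a x0"] dist_triangle[of "\<phi> a x0" "\<phi> a q" x0]
        by (simp add: dist_commute abs_le_iff)
    qed
    have fiber: "card B \<le> N0" if B: "B \<subseteq> U1"
      and Bp: "\<And>a b. a \<in> B \<Longrightarrow> b \<in> B \<Longrightarrow> gromov_product (\<phi> a q) (\<phi> b q) x0 \<ge> T - \<delta> \<and>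
                 \<bar>dist x0 (\<phi> a q) - dist x0 (\<phi> b q)\<bar> \<le> \<delta>" for B
    proof (cases "B = {}")
      case True then show ?thesis by simp
    next
      case False
      then obtain a0 where a0: "a0 \<in> B" by auto
      have a0c: "a0 \<in> carrier G" using a0 B U1c by auto
      define S where "S = {g \<in> carrier G. dist (\<phi> g p1) p1 \<le> 100 * \<delta> \<and> dist (\<phi> g p2) p2 \<le> 100 * \<delta>}"
      have S: "finite S" "card S \<le> N0" using acyl[of p1 p2] dp12 unfolding S_def by auto
      have inj: "inj_on (\<lambda>b. inv\<^bsub>G\<^esub> a0 \<otimes>\<^bsub>G\<^esub> b) B"
        using B U1c a0c grp by (intro inj_onI) (metis group.inv_closed group.Units_eq monoid.Units_l_cancel group.is_monoid subsetD)
      have img: "(\<lambda>b. inv\<^bsub>G\<^esub> a0 \<otimes>\<^bsub>G\<^esub> b) ` B \<subseteq> S"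
      proof
        fix g assume "g \<in> (\<lambda>b. inv\<^bsub>G\<^esub> a0 \<otimes>\<^bsub>G\<^esub> b) ` B"
        then obtain b where b: "b \<in> B" "g = inv\<^bsub>G\<^esub> a0 \<otimes>\<^bsub>G\<^esub> b" by auto
        have bc: "b \<in> carrier G" using b B U1c by auto
        have ia: "inv\<^bsub>G\<^esub> a0 \<in> carrier G" using a0c grp by (simp add: group.inv_closed)
        have gc: "g \<in> carrier G" using b bc ia grp by (simp add: monoid.m_closed[OF group.is_monoid])
        have disp: "dist (\<phi> g p) p = dist (\<phi> a0 p) (\<phi> b p)" for p
        proof -
          have "dist (\<phi> g p) p = dist (\<phi> (inv\<^bsub>G\<^esub> a0) (\<phi> b p)) p" using b H.act_mult[OF ia bc] by simp
          also have "\<dots> = dist (\<phi> a0 (\<phi> (inv\<^bsub>G\<^esub> a0) (\<phi> b p))) (\<phi> a0 p)" using isoG[OF a0c] by simp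
          also have "\<dots> = dist (\<phi> b p) (\<phi> a0 p)" using H.act_inv2[OF a0c] by simp
          finally show ?thesis by (simp add: dist_commute)
        qed
        have gT: "gromov_product (\<phi> a0 q) (\<phi> b q) x0 \<ge> T - \<delta>" and sg: "\<bar>dist x0 (\<phi> a0 q) - dist x0 (\<phi> b q)\<bar> \<le> \<delta>"
          using Bp[OF a0 b(1)] by auto
        have "dist (\<phi> a0 p1) (\<phi> b p1) \<le> 9 * \<delta>"
          by (rule H.fellow_lemma[OF a0c U1c(2) bc U1c(2) _ dp1(1) dp1(2) dq _ gT sg])
             (use a0 b B kd dpos in \<open>auto simp: T_def\<close>)
        moreover have "dist (\<phi> a0 p2) (\<phi> b p2) \<le> 9 * \<delta>"
          by (rule H.fellow_lemma[OF a0c U1c(2) bc U1c(2) _ dp2(1) dp2(2) dq _ gT sg])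
             (use a0 b B kd dpos in \<open>auto simp: T_def\<close>)
        ultimately show "g \<in> S" unfolding S_def using gc disp dpos by auto
      qed
      have "card B = card ((\<lambda>b. inv\<^bsub>G\<^esub> a0 \<otimes>\<^bsub>G\<^esub> b) ` B)" using inj by (simp add: card_image)
      also have "\<dots> \<le> card S" using img S(1) by (rule card_mono[rotated])
      finally show ?thesis using S(2) by linarith
    qed

    define P where "P = (\<lambda>a b. gromov_product (\<phi> a q) (\<phi> b q) x0 > T)"
    have Prefl: "P a a" if a: "a \<in> U1" for a
    proof -
      have "gromov_product (\<phi> a q) (\<phi> a q) x0 = dist (\<phi> a q) x0" by (rule gp_same)
      moreover have "dist (\<phi> a q) x0 \<ge> L - \<kappa>0" using sig[OF a] by (simp add: dist_commute abs_le_iff)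
      ultimately show ?thesis unfolding P_def T_def using Lbig kpos by simp
    qed
    have Psym: "P a b \<Longrightarrow> P b a" for a b unfolding P_def using gp_sym by metis
    obtain V0 where V0: "V0 \<subseteq> U1" "\<forall>a\<in>V0. \<forall>b\<in>V0. a \<noteq> b \<longrightarrow> \<not> P a b" "\<forall>a\<in>U1. \<exists>v\<in>V0. P a v"
      using greedy[OF finU1, of P] Prefl Psym by blast
    have finV0: "finite V0" using V0(1) finU1 finite_subset by blast
    define K where "K = \<lfloor>2 * \<kappa>0 / \<delta>\<rfloor>"
    define f where "f = (\<lambda>a. \<lfloor>(dist x0 (\<phi> a q) - L + \<kappa>0) / \<delta>\<rfloor>)"
    have fK: "f a \<in> {0..K}" if a: "a \<in> U1" for a
    proof -
      have "0 \<le> (dist x0 (\<phi> a q) - L + \<kappa>0) / \<delta>" "(dist x0 (\<phi> a q) - L + \<kappa>0) / \<delta> \<le> 2 * \<kappa>0 / \<delta>"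
        using sig[OF a] dpos by (auto simp: abs_le_iff divide_right_mono)
      thus ?thesis unfolding f_def K_def by (auto intro: floor_mono)
    qed
    define Cv where "Cv = (\<lambda>v. {a \<in> U1. P a v})"
    have cardC: "card (Cv v) \<le> nat (K + 1) * N0" if v: "v \<in> V0" for v
    proof -
      have "card (Cv v) \<le> card {0..K} * N0"
      proof (rule card_cover[where C = "\<lambda>j. {a \<in> Cv v. f a = j}"])
        show "finite {0..K}" by simp
        show "Cv v \<subseteq> (\<Union>j\<in>{0..K}. {a \<in> Cv v. f a = j})" using fK unfolding Cv_def by auto
        show "finite {a \<in> Cv v. f a = j}" for j using finU1 unfolding Cv_def by simp
        show "card {a \<in> Cv v. f a = j} \<le> N0" for j
        proof (rule fiber)
          show "{a \<in> Cv v. f a = j} \<subseteq> U1" unfolding Cv_def by auto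
          fix a b assume a: "a \<in> {a \<in> Cv v. f a = j}" and b: "b \<in> {a \<in> Cv v. f a = j}"
          have "gromov_product (\<phi> a q) (\<phi> b q) x0 \<ge>
              min (gromov_product (\<phi> a q) (\<phi> v q) x0) (gromov_product (\<phi> v q) (\<phi> b q) x0) - \<delta>"
            by (rule hypG)
          moreover have "gromov_product (\<phi> a q) (\<phi> v q) x0 > T" "gromov_product (\<phi> v q) (\<phi> b q) x0 > T"
            using a b gp_sym[of "\<phi> v q" "\<phi> b q" x0] unfolding Cv_def P_def by auto
          ultimately have "gromov_product (\<phi> a q) (\<phi> b q) x0 \<ge> T - \<delta>" by linarith
          moreover have "\<bar>(dist x0 (\<phi> a q) - L + \<kappa>0) - (dist x0 (\<phi> b q) - L + \<kappa>0)\<bar> \<le> \<delta>"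
          proof -
            have "f a = f b" using a b by simp
            from floor_eq_close[OF this[unfolded f_def] dpos] show ?thesis .
          qed
          ultimately show "gromov_product (\<phi> a q) (\<phi> b q) x0 \<ge> T - \<delta> \<and>
                 \<bar>dist x0 (\<phi> a q) - dist x0 (\<phi> b q)\<bar> \<le> \<delta>" by simp
        qed
      qed
      thus ?thesis by simp
    qed
    have cU1: "card U1 \<le> card V0 * (nat (K + 1) * N0)"
      by (rule card_cover[OF finV0 _ cardC, of U1]) (use V0(3) finU1 in \<open>auto simp: Cv_def\<close>)
    have K0: "K \<ge> 0" unfolding K_def using dpos kpos by simp
    have "real (nat (K + 1)) = real_of_int K + 1" using K0 by simp
    also have "\<dots> \<le> 2 * \<kappa>0 / \<delta> + 1" unfolding K_def by linarith
    also have "\<dots> \<le> 3 * \<kappa>0 / \<delta>" using kd dpos by (simp add: field_simps)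
    finally have Kb: "real (nat (K + 1)) \<le> 3 * \<kappa>0 / \<delta>" .
    have "real (card U) / 4 \<le> real (card U1)" using assms(11) unfolding U1_def .
    also have "\<dots> \<le> real (card V0) * (real (nat (K + 1)) * real N0)" using cU1 by (metis of_nat_le_iff of_nat_mult)
    also have "\<dots> \<le> real (card V0) * (3 * \<kappa>0 / \<delta> * real N0)"
      using Kb by (intro mult_left_mono mult_right_mono) auto
    finally have cV0a: "real (card U) / 4 \<le> real (card V0) * (3 * \<kappa>0 / \<delta> * real N0)" .
    have "\<beta> * (10^6 / 3) \<le> real (card V0)"
    proof -
      have pos: "3 * \<kappa>0 / \<delta> * real N0 > 0" using kpos dpos N0 by simp
      have "\<beta> * (10^6 / 3) = (real (card U) / 4) / (3 * \<kappa>0 / \<delta> * real N0)"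
        unfolding \<beta>_def using kpos dpos N0 by (simp add: field_simps)
      also have "\<dots> \<le> real (card V0)" using cV0a by (subst pos_divide_le_eq[OF pos]) simp
      finally show ?thesis .
    qed
    hence cV0: "real (card V0) \<ge> \<beta> + 1" using b1 by (simp add: field_simps)

    define iu where "iu = inv\<^bsub>G\<^esub> u"
    have iuc: "iu \<in> carrier G" unfolding iu_def using uc grp by (simp add: group.inv_closed)
    define V where "V = {b \<in> V0. gromov_product (\<phi> iu x0) (\<phi> b q) x0 \<le> T + \<delta>}"
    have VV0: "V \<subseteq> V0" unfolding V_def by auto
    have finV: "finite V" using finV0 VV0 finite_subset by blast
    have "card (V0 - V) \<le> Suc 0"
    proof (subst card_le_Suc0_iff_eq)
      show "finite (V0 - V)" using finV0 by simp
      show "\<forall>a1\<in>V0 - V. \<forall>a2\<in>V0 - V. a1 = a2"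
      proof (intro ballI, rule ccontr)
        fix b b' assume b: "b \<in> V0 - V" and b': "b' \<in> V0 - V" and ne: "b \<noteq> b'"
        have "gromov_product (\<phi> b q) (\<phi> b' q) x0 \<ge>
           min (gromov_product (\<phi> b q) (\<phi> iu x0) x0) (gromov_product (\<phi> iu x0) (\<phi> b' q) x0) - \<delta>"
          by (rule hypG)
        moreover have "gromov_product (\<phi> b q) (\<phi> iu x0) x0 > T + \<delta>" "gromov_product (\<phi> iu x0) (\<phi> b' q) x0 > T + \<delta>"
          using b b' gp_sym[of "\<phi> b q" "\<phi> iu x0" x0] unfolding V_def by auto
        ultimately have "gromov_product (\<phi> b q) (\<phi> b' q) x0 > T" by linarith
        moreover have "\<not> P b b'" using V0(2) b b' ne by auto
        ultimately show False unfolding P_def by simp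
      qed
    qed
    moreover have "card V0 \<le> card V + card (V0 - V)"
    proof -
      have "V0 = V \<union> (V0 - V)" using VV0 by auto
      hence "card V0 = card (V \<union> (V0 - V))" by simp
      also have "\<dots> \<le> card V + card (V0 - V)" by (rule card_Un_le)
      finally show ?thesis .
    qed
    ultimately have "card V0 \<le> card V + 1" by linarith
    hence cV: "real (card V) \<ge> \<beta>" using cV0 by linarith
    have VU1: "V \<subseteq> U1" using VV0 V0(1) by auto
    have Vc: "a \<in> V \<Longrightarrow> a \<in> carrier G" for a using VU1 U1c by auto
    have gc: "a \<in> V \<Longrightarrow> a \<otimes>\<^bsub>G\<^esub> u \<in> carrier G" for a
      using Vc uc grp by (simp add: monoid.m_closed[OF group.is_monoid])
    have gx: "a \<in> V \<Longrightarrow> \<phi> (a \<otimes>\<^bsub>G\<^esub> u) x0 = \<phi> a q" for a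
      using H.act_mult[OF Vc uc] unfolding q_def by simp
    have gD: "a \<in> V \<Longrightarrow> dist (\<phi> (a \<otimes>\<^bsub>G\<^esub> u) x0) x0 \<ge> L - \<kappa>0" for a
      using gx sig VU1 by (force simp: dist_commute abs_le_iff)
    have gback: "gromov_product (\<phi> (inv\<^bsub>G\<^esub> (a \<otimes>\<^bsub>G\<^esub> u)) x0) (\<phi> (b \<otimes>\<^bsub>G\<^esub> u) x0) x0 \<le> T + \<delta> + \<kappa>0"
      if a: "a \<in> V" and b: "b \<in> V" for a b
    proof -
      have ac: "a \<in> carrier G" using Vc a .
      have ia: "inv\<^bsub>G\<^esub> a \<in> carrier G" using ac grp by (simp add: group.inv_closed)
      have "inv\<^bsub>G\<^esub> (a \<otimes>\<^bsub>G\<^esub> u) = iu \<otimes>\<^bsub>G\<^esub> inv\<^bsub>G\<^esub> a"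
        unfolding iu_def using group.inv_mult_group[OF grp ac uc] .
      hence e: "\<phi> (inv\<^bsub>G\<^esub> (a \<otimes>\<^bsub>G\<^esub> u)) x0 = \<phi> iu (\<phi> (inv\<^bsub>G\<^esub> a) x0)"
        using H.act_mult[OF iuc ia] by simp
      have "dist (\<phi> iu (\<phi> (inv\<^bsub>G\<^esub> a) x0)) (\<phi> iu x0) = dist (\<phi> (inv\<^bsub>G\<^esub> a) x0) x0"
        using isoG[OF iuc] .
      also have "\<dots> = dist (\<phi> a (\<phi> (inv\<^bsub>G\<^esub> a) x0)) (\<phi> a x0)" using isoG[OF ac] by simp
      also have "\<dots> = dist x0 (\<phi> a x0)" using H.act_inv2[OF ac] by simp
      also have "\<dots> \<le> \<kappa>0" using U1c(2) VU1 a by (auto simp: dist_commute)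
      finally have dd: "dist (\<phi> (inv\<^bsub>G\<^esub> (a \<otimes>\<^bsub>G\<^esub> u)) x0) (\<phi> iu x0) \<le> \<kappa>0" using e by simp
      have "gromov_product (\<phi> iu x0) (\<phi> b q) x0 \<le> T + \<delta>" using b unfolding V_def by auto
      thus ?thesis using gp_perturb[of "\<phi> (inv\<^bsub>G\<^esub> (a \<otimes>\<^bsub>G\<^esub> u)) x0" "\<phi> b q" x0 "\<phi> iu x0"] dd gx[OF b]
        by (simp add: abs_le_iff)
    qed
    have gsep: "gromov_product (\<phi> (a \<otimes>\<^bsub>G\<^esub> u) x0) (\<phi> (b \<otimes>\<^bsub>G\<^esub> u) x0) x0 \<le> T + \<delta> + \<kappa>0"
      if a: "a \<in> V" and b: "b \<in> V" and ne: "a \<noteq> b" for a b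
    proof -
      have "\<not> P a b" using V0(2) a b ne VV0 by auto
      thus ?thesis unfolding P_def using gx[OF a] gx[OF b] dpos kpos by simp
    qed
    have Dbig: "L - \<kappa>0 > 3 * (T + \<delta> + \<kappa>0) + 3 * \<delta>" unfolding T_def using Lbig kd kpos by simp
    have epos: "T + \<delta> + \<kappa>0 \<ge> 0" unfolding T_def using kpos dpos by simp
    note ppi = H.pp_inj[where xb=x0 and V=V and g="\<lambda>a. a \<otimes>\<^bsub>G\<^esub> u" and D="L - \<kappa>0" and \<epsilon>="T + \<delta> + \<kappa>0", OF gc gD gback gsep Dbig epos]
    define W where "W = {as. set as \<subseteq> V \<and> length as = k}"
    have injW: "inj_on (wd G u) W"
    proof (rule inj_onI)
      fix as bs assume as: "as \<in> W" and bs: "bs \<in> W" and eq: "wd G u as = wd G u bs"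
      have ne: "as \<noteq> []" "bs \<noteq> []" using as bs k1 unfolding W_def by auto
      have sc: "set as \<subseteq> carrier G" "set bs \<subseteq> carrier G" using as bs Vc unfolding W_def by auto
      have "H.prodl (map (\<lambda>a. a \<otimes>\<^bsub>G\<^esub> u) as) = H.prodl (map (\<lambda>a. a \<otimes>\<^bsub>G\<^esub> u) bs)"
        using H.wd_prodl[OF uc sc(1) ne(1)] H.wd_prodl[OF uc sc(2) ne(2)] eq by simp
      thus "as = bs" using ppi as bs unfolding W_def by auto
    qed
    have imW: "wd G u ` W \<subseteq> set_power G U (2 * k - 1)"
    proof
      fix w assume "w \<in> wd G u ` W"
      then obtain as where as: "as \<in> W" "w = wd G u as" by auto
      have "as \<noteq> []" "set as \<subseteq> U" using as k1 VU1 unfolding W_def U1_def by auto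
      from wd_in[OF grp Uc u(1) this] show "w \<in> set_power G U (2 * k - 1)" using as unfolding W_def by simp
    qed
    have "card V ^ k = card W" unfolding W_def by (simp add: card_lists_length_eq[OF finV])
    also have "\<dots> = card (wd G u ` W)" using injW by (simp add: card_image)
    also have "\<dots> \<le> card (set_power G U (2 * k - 1))" using imW sp_finite[OF finU] by (rule card_mono[rotated])
    also have "\<dots> \<le> card (set_power G U n)" using sp_card_mono'[OF grp Uc finU neU k1(2)] .
    finally have "real (card V) ^ k \<le> real (card (set_power G U n))" by (metis of_nat_le_iff of_nat_power)
    moreover have "\<beta> ^ k \<le> real (card V) ^ k" using cV bpos by (rule power_mono)
    ultimately show ?thesis by linarith
  qed
  then show ?thesis unfolding \<beta>_def k_def .
qed


end
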